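(* Let $\sigma\in\Sigma^0_{E_N}$ be non-trivial, and assume there is an edge $e\in\mathrm{supp}\,\sigma$ with $\partial\hat\partial\partial\hat\partial e\subseteq E_N$. Then $|(\mathrm{supp}\,\sigma)^+|\ge 8$.
   Context: Work on $\mathbb Z^4$; oriented edges come in pairs $e,-e$; $dx_j=(x,x+\mathbf e_j)$ positively oriented. For a plaquette $p=dx_{j_1}\wedge dx_{j_2}$ ($j_1<j_2$), $\partial p=\{dx_{j_1},d(x+\mathbf e_{j_1})_{j_2},-d(x+\mathbf e_{j_2})_{j_1},-dx_{j_2}\}$, $\partial(-p)=-\partial p$. $\hat\partial e=\{p:e\in\partial p\}$; for sets $\partial A=\bigcup_{p\in A}\partial p$, $\hat\partial B=\bigcup_{e\in B}\hat\partial e$, so $\partial\hat\partial\partial\hat\partial e$ is obtained by applying these operations successively to $\{e\}$. $B_N=[-N,N]^4\cap\mathbb Z^4$; $E_N$, $P_N$ are the oriented edges/plaquettes with all vertices in $B_N$. $G=\mathbb Z_n$. $\Sigma_{E_N}$: maps $\sigma:E_N\to G$ with $\sigma_{-e}=-\sigma_e$; $(d\sigma)_p=\sum_{e\in\partial p}\sigma_e$; $\Sigma^0_{E_N}=\{d\sigma=0\}$. $\mathrm{supp}\,\sigma=\{e:\sigma_e\ne0\}$ and $(\cdot)^+$ denotes the positively oriented elements of a set. *)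

theory Defs
  imports "HOL-Analysis.Finite_Cartesian_Product"
begin

text \<open>An oriented edge (x, j, s): if s = True it is dx_j = (x, x + e_j),
 if s = False it is -dx_j. An oriented plaquette (x, j1, j2, s) with j1 < j2:
 s = True is dx_j1 wedge dx_j2, s = False is its negative.\<close>

type_synonym vertex = "int ^ 4"
type_synonym edge = "vertex \<times> 4 \<times> bool"
type_synonym plaq = "vertex \<times> 4 \<times> 4 \<times> bool"

definition unitv :: "4 \<Rightarrow> vertex" where
  "unitv j = (\<chi> i. if i = j then 1 else 0)"

fun edge_neg :: "edge \<Rightarrow> edge" where
  "edge_neg (x, j, s) = (x, j, \<not> s)"

fun edge_pos :: "edge \<Rightarrow> bool" where
  "edge_pos (x, j, s) = s"

fun edge_verts :: "edge \<Rightarrow> vertex set" where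
  "edge_verts (x, j, s) = {x, x + unitv j}"

fun is_plaq :: "plaq \<Rightarrow> bool" where
  "is_plaq (x, j1, j2, s) = (j1 < j2)"

fun plaq_verts :: "plaq \<Rightarrow> vertex set" where
  "plaq_verts (x, j1, j2, s) = {x, x + unitv j1, x + unitv j2, x + unitv j1 + unitv j2}"

fun plaq_bd :: "plaq \<Rightarrow> edge set" where
  "plaq_bd (x, j1, j2, s) =
     (let B = {(x, j1, True), (x + unitv j1, j2, True), (x + unitv j2, j1, False), (x, j2, False)}
      in if s then B else edge_neg ` B)"

definition edge_cobd :: "edge \<Rightarrow> plaq set" where
  "edge_cobd e = {p. is_plaq p \<and> e \<in> plaq_bd p}"

definition bdS :: "plaq set \<Rightarrow> edge set" where
  "bdS A = \<Union> (plaq_bd ` A)"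

definition cobdS :: "edge set \<Rightarrow> plaq set" where
  "cobdS B = \<Union> (edge_cobd ` B)"

definition box :: "nat \<Rightarrow> vertex set" where
  "box N = {x. \<forall>i. \<bar>x $ i\<bar> \<le> int N}"

definition EN :: "nat \<Rightarrow> edge set" where
  "EN N = {e. edge_verts e \<subseteq> box N}"

definition PN :: "nat \<Rightarrow> plaq set" where
  "PN N = {p. is_plaq p \<and> plaq_verts p \<subseteq> box N}"

text \<open>G = Z_n, elements represented by the integers 0..n-1. sigma is only relevant on E_N.
 closed_config n N sigma: sigma is in Sigma^0_{E_N}.\<close>
definition closed_config :: "nat \<Rightarrow> nat \<Rightarrow> (edge \<Rightarrow> int) \<Rightarrow> bool" where
  "closed_config n N \<sigma> \<longleftrightarrow>
     (\<forall>e\<in>EN N. \<sigma> e \<in> {0..<int n} \<and> \<sigma> (edge_neg e) = (- \<sigma> e) mod int n) \<and>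
     (\<forall>p\<in>PN N. (\<Sum>e\<in>plaq_bd p. \<sigma> e) mod int n = 0)"

definition supp :: "nat \<Rightarrow> (edge \<Rightarrow> int) \<Rightarrow> edge set" where
  "supp N \<sigma> = {e \<in> EN N. \<sigma> e \<noteq> 0}"

end

theory Submission
  imports Defs "HOL-Analysis.Cartesian_Space"
begin

definition plE :: "vertex \<Rightarrow> 4 \<Rightarrow> 4 \<Rightarrow> (vertex \<times> 4) set" where
  "plE y a b = {(y,a),(y+unitv a,b),(y+unitv b,a),(y,b)}"

lemma plE_sym: "plE y a b = plE y b a"
  unfolding plE_def by auto

lemma unitv_comp: "unitv a $ i = (if i = a then 1 else 0)"
  by (simp add: unitv_def)

lemma add_unitv_neq[simp]: "y + unitv a \<noteq> y" "y \<noteq> y + unitv a"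
proof -
  show "y + unitv a \<noteq> y"
  proof
    assume "y + unitv a = y"
    hence "(y + unitv a) $ a = y $ a" by simp
    thus False by (simp add: unitv_comp)
  qed
  thus "y \<noteq> y + unitv a" by metis
qed

lemma unitv_nz[simp]: "unitv a \<noteq> 0"
proof
  assume "unitv a = 0"
  hence "unitv a $ a = 0" by simp
  thus False by (simp add: unitv_comp)
qed

lemma all4:
  assumes "UNIV = {c,d1,d2,d3::4}"
  shows "(\<forall>i::4. P i) \<longleftrightarrow> P c \<and> P d1 \<and> P d2 \<and> P d3"
proof
  assume "\<forall>i. P i" thus "P c \<and> P d1 \<and> P d2 \<and> P d3" by blast
next
  assume H: "P c \<and> P d1 \<and> P d2 \<and> P d3"
  show "\<forall>i. P i"
  proof
    fix i
    have "i \<in> {c,d1,d2,d3}" using assms by blast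
    thus "P i" using H by auto
  qed
qed

lemma get_dirs:
  fixes j :: 4
  obtains k m1 m2 where "distinct [j,k,m1,m2]" "UNIV = {j,k,m1,m2}"
proof -
  have "j = 1 \<or> j = 2 \<or> j = 3 \<or> j = 4" using exhaust_4 by blast
  thus ?thesis
  proof (elim disjE)
    assume "j = 1" thus ?thesis using that[of 2 3 4] UNIV_4 by auto
  next
    assume "j = 2" thus ?thesis using that[of 1 3 4] UNIV_4 by auto
  next
    assume "j = 3" thus ?thesis using that[of 1 2 4] UNIV_4 by auto
  next
    assume "j = 4" thus ?thesis using that[of 1 2 3] UNIV_4 by auto
  qed
qed

lemma six:
  fixes nz :: "vertex \<times> 4 \<Rightarrow> bool" and z :: vertex
  assumes dist: "distinct [c,d1,d2,d3]" and U: "UNIV = {c,d1,d2,d3}"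
    and h: "\<And>y a b. a \<noteq> b \<Longrightarrow> (z,c) \<in> plE y a b \<Longrightarrow> \<exists>g\<in>plE y a b - {(z,c)}. nz g"
    and g2: "g \<notin> plE z c d1 \<union> plE (z - unitv d1) c d1 \<union> plE z c d2 \<union> plE (z - unitv d2) c d2
               \<union> plE z c d3 \<union> plE (z - unitv d3) c d3"
    and nzf: "nz (z,c)" and nzg: "nz g"
  shows "\<exists>L. distinct L \<and> length L = 8 \<and> set L \<subseteq> Collect nz"
proof -
  have ne: "c \<noteq> d1" "c \<noteq> d2" "c \<noteq> d3" "d1 \<noteq> d2" "d1 \<noteq> d3" "d2 \<noteq> d3"
    "d1 \<noteq> c" "d2 \<noteq> c" "d3 \<noteq> c" "d2 \<noteq> d1" "d3 \<noteq> d1" "d3 \<noteq> d2" using dist by auto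
  note A = all4[OF U]
  have in6: "(z,c) \<in> plE z c d1" "(z,c) \<in> plE (z - unitv d1) c d1"
     "(z,c) \<in> plE z c d2" "(z,c) \<in> plE (z - unitv d2) c d2"
     "(z,c) \<in> plE z c d3" "(z,c) \<in> plE (z - unitv d3) c d3"
    by (auto simp: plE_def)
  obtain c1 where c1: "c1 \<in> plE z c d1 - {(z,c)}" "nz c1" using h[OF ne(1) in6(1)] by blast
  obtain c2 where c2: "c2 \<in> plE (z - unitv d1) c d1 - {(z,c)}" "nz c2" using h[OF ne(1) in6(2)] by blast
  obtain c3 where c3: "c3 \<in> plE z c d2 - {(z,c)}" "nz c3" using h[OF ne(2) in6(3)] by blast
  obtain c4 where c4: "c4 \<in> plE (z - unitv d2) c d2 - {(z,c)}" "nz c4" using h[OF ne(2) in6(4)] by blast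
  obtain c5 where c5: "c5 \<in> plE z c d3 - {(z,c)}" "nz c5" using h[OF ne(3) in6(5)] by blast
  obtain c6 where c6: "c6 \<in> plE (z - unitv d3) c d3 - {(z,c)}" "nz c6" using h[OF ne(3) in6(6)] by blast
  have D: "\<And>P Q. P \<inter> Q \<subseteq> {(z,c)} \<Longrightarrow> p \<in> P - {(z,c)} \<Longrightarrow> q \<in> Q - {(z,c)} \<Longrightarrow> p \<noteq> q" for p q
    by blast
  have i12: "plE z c d1 \<inter> plE (z - unitv d1) c d1 \<subseteq> {(z,c)}"
    using ne by (auto simp: plE_def vec_eq_iff A unitv_comp)
  have i13: "plE z c d1 \<inter> plE z c d2 \<subseteq> {(z,c)}"
    using ne by (auto simp: plE_def vec_eq_iff A unitv_comp)
  have i14: "plE z c d1 \<inter> plE (z - unitv d2) c d2 \<subseteq> {(z,c)}"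
    using ne by (auto simp: plE_def vec_eq_iff A unitv_comp)
  have i15: "plE z c d1 \<inter> plE z c d3 \<subseteq> {(z,c)}"
    using ne by (auto simp: plE_def vec_eq_iff A unitv_comp)
  have i16: "plE z c d1 \<inter> plE (z - unitv d3) c d3 \<subseteq> {(z,c)}"
    using ne by (auto simp: plE_def vec_eq_iff A unitv_comp)
  have i23: "plE (z - unitv d1) c d1 \<inter> plE z c d2 \<subseteq> {(z,c)}"
    using ne by (auto simp: plE_def vec_eq_iff A unitv_comp)
  have i24: "plE (z - unitv d1) c d1 \<inter> plE (z - unitv d2) c d2 \<subseteq> {(z,c)}"
    using ne by (auto simp: plE_def vec_eq_iff A unitv_comp)
  have i25: "plE (z - unitv d1) c d1 \<inter> plE z c d3 \<subseteq> {(z,c)}"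
    using ne by (auto simp: plE_def vec_eq_iff A unitv_comp)
  have i26: "plE (z - unitv d1) c d1 \<inter> plE (z - unitv d3) c d3 \<subseteq> {(z,c)}"
    using ne by (auto simp: plE_def vec_eq_iff A unitv_comp)
  have i34: "plE z c d2 \<inter> plE (z - unitv d2) c d2 \<subseteq> {(z,c)}"
    using ne by (auto simp: plE_def vec_eq_iff A unitv_comp)
  have i35: "plE z c d2 \<inter> plE z c d3 \<subseteq> {(z,c)}"
    using ne by (auto simp: plE_def vec_eq_iff A unitv_comp)
  have i36: "plE z c d2 \<inter> plE (z - unitv d3) c d3 \<subseteq> {(z,c)}"
    using ne by (auto simp: plE_def vec_eq_iff A unitv_comp)
  have i45: "plE (z - unitv d2) c d2 \<inter> plE z c d3 \<subseteq> {(z,c)}"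
    using ne by (auto simp: plE_def vec_eq_iff A unitv_comp)
  have i46: "plE (z - unitv d2) c d2 \<inter> plE (z - unitv d3) c d3 \<subseteq> {(z,c)}"
    using ne by (auto simp: plE_def vec_eq_iff A unitv_comp)
  have i56: "plE z c d3 \<inter> plE (z - unitv d3) c d3 \<subseteq> {(z,c)}"
    using ne by (auto simp: plE_def vec_eq_iff A unitv_comp)
  have "distinct [(z,c), g, c1, c2, c3, c4, c5, c6]"
    using D[OF i12 c1(1) c2(1)] D[OF i13 c1(1) c3(1)] D[OF i14 c1(1) c4(1)]
      D[OF i15 c1(1) c5(1)] D[OF i16 c1(1) c6(1)] D[OF i23 c2(1) c3(1)]
      D[OF i24 c2(1) c4(1)] D[OF i25 c2(1) c5(1)] D[OF i26 c2(1) c6(1)]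
      D[OF i34 c3(1) c4(1)] D[OF i35 c3(1) c5(1)] D[OF i36 c3(1) c6(1)]
      D[OF i45 c4(1) c5(1)] D[OF i46 c4(1) c6(1)] D[OF i56 c5(1) c6(1)]
      c1(1) c2(1) c3(1) c4(1) c5(1) c6(1) g2 in6
    by auto
  thus ?thesis using nzf nzg c1 c2 c3 c4 c5 c6
    by (intro exI[of _ "[(z,c), g, c1, c2, c3, c4, c5, c6]"]) auto
qed

lemma comb:
  fixes nz :: "vertex \<times> 4 \<Rightarrow> bool" and x :: vertex
  assumes dist: "distinct [j,k,m1,m2]" and U: "UNIV = {j,k,m1,m2}"
    and a1: "a1 \<in> plE x j k - {(x,j)}" and a2: "a2 \<in> plE (x - unitv k) j k - {(x,j)}"
    and h: "\<And>y a b. a \<noteq> b \<Longrightarrow> a1 \<in> plE y a b \<Longrightarrow> \<exists>g\<in>plE y a b - {a1}. nz g"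
    and n1: "nz a1" and n2: "nz a2"
  shows "\<exists>L. distinct L \<and> length L = 8 \<and> set L \<subseteq> Collect nz"
proof -
  have ne: "j \<noteq> k" "j \<noteq> m1" "j \<noteq> m2" "k \<noteq> m1" "k \<noteq> m2" "m1 \<noteq> m2"
    "k \<noteq> j" "m1 \<noteq> j" "m2 \<noteq> j" "m1 \<noteq> k" "m2 \<noteq> k" "m2 \<noteq> m1" using dist by auto
  note A4 = all4[OF U]
  have U2: "UNIV = {k,j,m1,m2}" using U by auto
  have d2: "distinct [k,j,m1,m2]" using dist by auto
  have a2c: "a2 = (x - unitv k, j) \<or> a2 = (x - unitv k + unitv j, k) \<or> a2 = (x - unitv k, k)"
    using a2 by (auto simp: plE_def)
  have "a1 = (x + unitv j, k) \<or> a1 = (x + unitv k, j) \<or> a1 = (x, k)"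
    using a1 by (auto simp: plE_def)
  then consider (A) "a1 = (x + unitv j, k)" | (B) "a1 = (x + unitv k, j)" | (C) "a1 = (x, k)" by blast
  thus ?thesis
  proof cases
    case A
    show ?thesis
    proof (rule six[OF d2 U2, of "x + unitv j" nz a2])
      show "\<And>y a b. a \<noteq> b \<Longrightarrow> (x + unitv j, k) \<in> plE y a b \<Longrightarrow> \<exists>g\<in>plE y a b - {(x + unitv j, k)}. nz g"
        using h A by simp
      show "nz (x + unitv j, k)" using n1 A by simp
      show "nz a2" by fact
      show "a2 \<notin> plE (x + unitv j) k j \<union> plE (x + unitv j - unitv j) k j \<union> plE (x + unitv j) k m1 \<union>
        plE (x + unitv j - unitv m1) k m1 \<union> plE (x + unitv j) k m2 \<union> plE (x + unitv j - unitv m2) k m2"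
        using a2c ne by (auto simp: plE_def vec_eq_iff A4 unitv_comp)
    qed
  next
    case B
    show ?thesis
    proof (rule six[OF dist U, of "x + unitv k" nz a2])
      show "\<And>y a b. a \<noteq> b \<Longrightarrow> (x + unitv k, j) \<in> plE y a b \<Longrightarrow> \<exists>g\<in>plE y a b - {(x + unitv k, j)}. nz g"
        using h B by simp
      show "nz (x + unitv k, j)" using n1 B by simp
      show "nz a2" by fact
      show "a2 \<notin> plE (x + unitv k) j k \<union> plE (x + unitv k - unitv k) j k \<union> plE (x + unitv k) j m1 \<union>
        plE (x + unitv k - unitv m1) j m1 \<union> plE (x + unitv k) j m2 \<union> plE (x + unitv k - unitv m2) j m2"
        using a2c ne by (auto simp: plE_def vec_eq_iff A4 unitv_comp)
    qed
  next
    case C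
    show ?thesis
    proof (rule six[OF d2 U2, of "x" nz a2])
      show "\<And>y a b. a \<noteq> b \<Longrightarrow> (x, k) \<in> plE y a b \<Longrightarrow> \<exists>g\<in>plE y a b - {(x, k)}. nz g"
        using h C by simp
      show "nz (x, k)" using n1 C by simp
      show "nz a2" by fact
      show "a2 \<notin> plE x k j \<union> plE (x - unitv j) k j \<union> plE x k m1 \<union>
        plE (x - unitv m1) k m1 \<union> plE x k m2 \<union> plE (x - unitv m2) k m2"
        using a2c ne by (auto simp: plE_def vec_eq_iff A4 unitv_comp)
    qed
  qed
qed

definition nzE :: "nat \<Rightarrow> (edge \<Rightarrow> int) \<Rightarrow> vertex \<times> 4 \<Rightarrow> bool" where
  "nzE N \<sigma> g = ((fst g, snd g, True) \<in> EN N \<and> \<sigma> (fst g, snd g, True) \<noteq> 0)"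

lemma EN_orient: "((w,d,t) \<in> EN N) = ((w,d,t') \<in> EN N)"
  by (simp add: EN_def)

lemma bd_true: "plaq_bd (y,a,b,True) =
   {(y,a,True),(y+unitv a,b,True),(y+unitv b,a,False),(y,b,False)}"
  by simp

lemma bd_false: "plaq_bd (y,a,b,False) =
   {(y,a,False),(y+unitv a,b,False),(y+unitv b,a,True),(y,b,True)}"
  by simp

lemma bd_plE: "(w,d,t) \<in> plaq_bd (y,a,b,s) \<Longrightarrow> (w,d) \<in> plE y a b"
  by (cases s) (auto simp: plE_def simp del: plaq_bd.simps simp add: bd_true bd_false)

lemma PL:
  assumes cc: "closed_config n N \<sigma>" and ab: "a < b"
    and bx: "y \<in> box N" "y + unitv a \<in> box N" "y + unitv b \<in> box N" "y + unitv a + unitv b \<in> box N"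
    and f: "(z,c) \<in> plE y a b" and nzf: "nzE N \<sigma> (z,c)"
  shows "\<exists>g\<in>plE y a b - {(z,c)}. nzE N \<sigma> g"
proof (rule ccontr)
  assume con: "\<not> ?thesis"
  define B where "B = plaq_bd (y,a,b,True)"
  have Bd: "B = {(y,a,True),(y+unitv a,b,True),(y+unitv b,a,False),(y,b,False)}"
    unfolding B_def by simp
  have comm: "y + unitv b + unitv a = y + unitv a + unitv b" by (simp add: add_ac)
  have pP: "(y,a,b,True) \<in> PN N" using ab bx by (auto simp: PN_def)
  have hs: "(\<Sum>g\<in>B. \<sigma> g) mod int n = 0" using cc pP unfolding closed_config_def B_def by blast
  have BEN: "g \<in> EN N" if "g \<in> B" for g
    using that bx by (auto simp: Bd EN_def comm)
  have ccE: "\<forall>e\<in>EN N. \<sigma> e \<in> {0..<int n} \<and> \<sigma> (edge_neg e) = (- \<sigma> e) mod int n"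
    using cc unfolding closed_config_def by blast
  have zero: "\<sigma> (w,d,t) = 0" if wt: "(w,d,t) \<in> B" and wne: "(w,d) \<noteq> (z,c)" for w d t
  proof -
    have "(w,d) \<in> plE y a b" using wt bd_plE B_def by blast
    hence z0: "\<not> nzE N \<sigma> (w,d)" using con wne by blast
    have en: "(w,d,True) \<in> EN N" using BEN[OF wt] EN_orient by blast
    hence s0: "\<sigma> (w,d,True) = 0" using z0 by (simp add: nzE_def)
    show ?thesis
    proof (cases t)
      case True thus ?thesis using s0 by simp
    next
      case False
      have "\<sigma> (edge_neg (w,d,True)) = (- \<sigma> (w,d,True)) mod int n" using ccE en by blast
      thus ?thesis using s0 False by simp
    qed
  qed
  have nb: "\<not> ((w,d,True) \<in> B \<and> (w,d,False) \<in> B)" for w d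
    using ab by (auto simp: Bd)
  obtain t0 where t0: "(z,c,t0) \<in> B" using f unfolding plE_def Bd by auto
  have rest: "(\<Sum>g\<in>B - {(z,c,t0)}. \<sigma> g) = 0"
  proof (rule sum.neutral, rule ballI)
    fix g assume g: "g \<in> B - {(z,c,t0)}"
    obtain w d t where gw: "g = (w,d,t)" by (cases g)
    have h: "(w,d,t) \<in> B" "(w,d,t) \<notin> {(z,c,t0)}" using g gw by auto
    have "(w,d) \<noteq> (z,c)"
    proof
      assume "(w,d) = (z,c)"
      hence ht: "t \<noteq> t0" "w = z" "d = c" using h by auto
      have "(z,c,t) \<in> B" using h(1) ht by simp
      thus False using nb[of z c] t0 ht(1) by (cases t) auto
    qed
    thus "\<sigma> g = 0" using zero h gw by blast
  qed
  have "finite B" by (simp add: Bd)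
  hence "(\<Sum>g\<in>B. \<sigma> g) = \<sigma> (z,c,t0) + (\<Sum>g\<in>B - {(z,c,t0)}. \<sigma> g)"
    by (rule sum.remove[OF _ t0])
  hence m0: "\<sigma> (z,c,t0) mod int n = 0" using hs rest by simp
  have en: "(z,c,True) \<in> EN N" and v0: "\<sigma> (z,c,True) \<noteq> 0" using nzf by (auto simp: nzE_def)
  have vr: "\<sigma> (z,c,True) \<in> {0..<int n}" using ccE en by blast
  show False
  proof (cases t0)
    case True
    have "\<sigma> (z,c,True) mod int n = \<sigma> (z,c,True)" using vr by (intro mod_pos_pos_trivial) auto
    thus False using m0 True v0 by simp
  next
    case False
    have "\<sigma> (edge_neg (z,c,True)) = (- \<sigma> (z,c,True)) mod int n" using ccE en by blast
    hence "(- \<sigma> (z,c,True)) mod int n = 0" using m0 False by simp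
    hence "int n dvd \<sigma> (z,c,True)" by (simp add: mod_eq_0_iff_dvd)
    moreover have "0 < \<sigma> (z,c,True)" using vr v0 by simp
    ultimately have "int n \<le> \<sigma> (z,c,True)" by (rule zdvd_imp_le)
    thus False using vr by simp
  qed
qed

lemma PLsym:
  assumes cc: "closed_config n N \<sigma>" and ab: "a \<noteq> b"
    and bx: "y \<in> box N" "y + unitv a \<in> box N" "y + unitv b \<in> box N" "y + unitv a + unitv b \<in> box N"
    and f: "(z,c) \<in> plE y a b" and nzf: "nzE N \<sigma> (z,c)"
  shows "\<exists>g\<in>plE y a b - {(z,c)}. nzE N \<sigma> g"
proof (cases "a < b")
  case True thus ?thesis using PL[OF cc True bx f nzf] by blast
next
  case False
  hence ba: "b < a" using ab by (simp add: neq_iff)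
  have comm: "y + unitv b + unitv a = y + unitv a + unitv b" by (simp add: add_ac)
  show ?thesis using PL[OF cc ba, of y] bx comm f nzf plE_sym by metis
qed

lemma spread_lt:
  assumes ab: "a < b" and w: "(w,d) \<in> plE y a b" and wt: "(w,d,t) \<in> Bs" and w': "(w',d') \<in> plE y a b"
  shows "\<exists>t'. (w',d',t') \<in> bdS (cobdS Bs)"
proof -
  have "(w,d,t) \<in> plaq_bd (y,a,b,True) \<or> (w,d,t) \<in> plaq_bd (y,a,b,False)"
    using w by (cases t) (auto simp: plE_def simp del: plaq_bd.simps simp add: bd_true bd_false)
  then obtain s' where s': "(w,d,t) \<in> plaq_bd (y,a,b,s')" by blast
  have "(w',d',True) \<in> plaq_bd (y,a,b,s') \<or> (w',d',False) \<in> plaq_bd (y,a,b,s')"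
    using w' by (cases s') (auto simp: plE_def simp del: plaq_bd.simps simp add: bd_true bd_false)
  then obtain t' where t': "(w',d',t') \<in> plaq_bd (y,a,b,s')" by blast
  have "(y,a,b,s') \<in> cobdS Bs" using s' wt ab unfolding cobdS_def edge_cobd_def by auto
  hence "(w',d',t') \<in> bdS (cobdS Bs)" using t' unfolding bdS_def by blast
  thus ?thesis by blast
qed

lemma spread:
  assumes ab: "a \<noteq> b" and w: "(w,d) \<in> plE y a b" and wt: "(w,d,t) \<in> Bs" and w': "(w',d') \<in> plE y a b"
  shows "\<exists>t'. (w',d',t') \<in> bdS (cobdS Bs)"
proof (cases "a < b")
  case True show ?thesis by (rule spread_lt[OF True w wt w'])
next
  case False
  hence ba: "b < a" using ab by (simp add: neq_iff)
  show ?thesis using spread_lt[OF ba, of w d y t Bs w' d'] w wt w' plE_sym by metis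
qed

lemma vbox:
  assumes "\<forall>(w,d) \<in> plE y a b. \<exists>t. (w,d,t) \<in> EN N"
  shows "y \<in> box N" "y + unitv a \<in> box N" "y + unitv b \<in> box N" "y + unitv a + unitv b \<in> box N"
proof -
  have "(y,a) \<in> plE y a b" "(y+unitv a,b) \<in> plE y a b" "(y,b) \<in> plE y a b" by (auto simp: plE_def)
  hence "\<exists>t. (y,a,t) \<in> EN N" "\<exists>t. (y+unitv a,b,t) \<in> EN N" "\<exists>t. (y,b,t) \<in> EN N"
    using assms by auto
  thus "y \<in> box N" "y + unitv a \<in> box N" "y + unitv b \<in> box N" "y + unitv a + unitv b \<in> box N"
    by (auto simp: EN_def)
qed

lemma finite_box: "finite (box N)"
proof -
  let ?f = "\<lambda>x::vertex. (x$1, x$2, x$3, x$4)"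
  have inj: "inj_on ?f (box N)"
    by (auto simp: inj_on_def vec_eq_iff forall_4)
  have B: "x$i \<in> {-int N..int N}" if "x \<in> box N" for x :: vertex and i
  proof -
    have "\<bar>x$i\<bar> \<le> int N" using that by (simp add: box_def)
    thus ?thesis by auto
  qed
  have "?f ` box N \<subseteq> {-int N..int N} \<times> {-int N..int N} \<times> {-int N..int N} \<times> {-int N..int N}"
    using B by (auto simp del: atLeastAtMost_iff)
  hence "finite (?f ` box N)" by (rule finite_subset) auto
  thus ?thesis using inj finite_imageD by blast
qed

lemma finite_EN: "finite (EN N)"
proof -
  have "EN N \<subseteq> box N \<times> UNIV \<times> UNIV" by (auto simp: EN_def)
  moreover have "finite (box N \<times> (UNIV::4 set) \<times> (UNIV::bool set))" using finite_box by simp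
  ultimately show ?thesis by (rule finite_subset)
qed

theorem mainTheorem5:
  fixes n N :: nat and \<sigma> :: "edge \<Rightarrow> int" and e :: edge
  assumes "closed_config n N \<sigma>"
    and "supp N \<sigma> \<noteq> {}"
    and "e \<in> supp N \<sigma>"
    and "bdS (cobdS (bdS (cobdS {e}))) \<subseteq> EN N"
  shows "card {f \<in> supp N \<sigma>. edge_pos f} \<ge> 8"
proof -
  note cc = assms(1)
  obtain x j s0 where e: "e = (x,j,s0)" by (cases e)
  have eEN: "(x,j,s0) \<in> EN N" "\<sigma> (x,j,s0) \<noteq> 0" using assms(3) e by (auto simp: supp_def)
  have ccE: "\<forall>e\<in>EN N. \<sigma> e \<in> {0..<int n} \<and> \<sigma> (edge_neg e) = (- \<sigma> e) mod int n"
    using cc unfolding closed_config_def by blast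
  have enT: "(x,j,True) \<in> EN N" using eEN(1) EN_orient by blast
  have "\<sigma> (x,j,True) \<noteq> 0"
  proof
    assume z: "\<sigma> (x,j,True) = 0"
    have "\<sigma> (edge_neg (x,j,True)) = (- \<sigma> (x,j,True)) mod int n" using ccE enT by blast
    hence "\<sigma> (x,j,False) = 0" using z by simp
    thus False using eEN(2) z by (cases s0) auto
  qed
  hence nz0: "nzE N \<sigma> (x,j)" using enT by (simp add: nzE_def)
  define R2 where "R2 = bdS (cobdS {e})"
  have H: "bdS (cobdS R2) \<subseteq> EN N" using assms(4) R2_def by simp
  have inR2: "\<exists>t. (w,d,t) \<in> R2" if "a \<noteq> b" "(x,j) \<in> plE y a b" "(w,d) \<in> plE y a b" for y a b w d
    using spread[OF that(1,2) _ that(3), of s0 "{e}"] e R2_def by simp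
  have PLQ: "\<exists>g\<in>plE y a b - {(w,d)}. nzE N \<sigma> g"
    if ab: "a \<noteq> b" and wd: "(w,d) \<in> plE y a b" and wt: "(w,d,t) \<in> R2" and nzw: "nzE N \<sigma> (w,d)" for y a b w d t
  proof -
    have "\<forall>(w',d') \<in> plE y a b. \<exists>t'. (w',d',t') \<in> EN N"
    proof clarify
      fix w' d' assume "(w',d') \<in> plE y a b"
      then obtain t' where "(w',d',t') \<in> bdS (cobdS R2)" using spread[OF ab wd wt] by blast
      thus "\<exists>t'. (w',d',t') \<in> EN N" using H by blast
    qed
    note vb = vbox[OF this]
    show ?thesis by (rule PLsym[OF cc ab vb wd nzw])
  qed
  obtain k m1 m2 where dist: "distinct [j,k,m1,m2]" and U: "UNIV = {j,k,m1,m2}" by (rule get_dirs)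
  have jk: "j \<noteq> k" using dist by simp
  have P: "(x,j) \<in> plE x j k" by (simp add: plE_def)
  have P': "(x,j) \<in> plE (x - unitv k) j k" by (simp add: plE_def)
  obtain t where t: "(x,j,t) \<in> R2" using inR2[OF jk P P] by blast
  obtain a1 where a1: "a1 \<in> plE x j k - {(x,j)}" "nzE N \<sigma> a1" using PLQ[OF jk P t nz0] by blast
  obtain a2 where a2: "a2 \<in> plE (x - unitv k) j k - {(x,j)}" "nzE N \<sigma> a2"
    using PLQ[OF jk P' t nz0] by blast
  obtain w1 d1 where w1: "a1 = (w1,d1)" by (cases a1)
  obtain t1 where t1: "(w1,d1,t1) \<in> R2" using inR2[OF jk P] a1(1) w1 by blast
  have h: "\<exists>g\<in>plE y a b - {a1}. nzE N \<sigma> g" if "a \<noteq> b" "a1 \<in> plE y a b" for y a b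
    using PLQ[OF that(1) _ t1] that(2) a1(2) w1 by blast
  obtain L where L: "distinct L" "length L = 8" "set L \<subseteq> Collect (nzE N \<sigma>)"
    using comb[OF dist U a1(1) a2(1) h a1(2) a2(2)] by blast
  define M where "M = map (\<lambda>g. (fst g, snd g, True)) L"
  have "inj_on (\<lambda>g::vertex\<times>4. (fst g, snd g, True)) (set L)" by (auto simp: inj_on_def prod_eq_iff)
  hence dM: "distinct M" using L(1) by (simp add: M_def distinct_map)
  have sM: "set M \<subseteq> {f \<in> supp N \<sigma>. edge_pos f}"
    using L(3) by (auto simp: M_def supp_def nzE_def)
  have fin: "finite {f \<in> supp N \<sigma>. edge_pos f}"
    using finite_EN by (rule finite_subset[rotated]) (auto simp: supp_def)
  have "card (set M) = length M" by (rule distinct_card[OF dM])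
  hence "card (set M) = 8" using L(2) by (simp add: M_def)
  thus ?thesis using card_mono[OF fin sM] by simp
qed

end
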